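(* Let $\mathcal C\subset\mathbb R^2$ be a nonempty open bounded convex set with $0\in\mathcal C$, and let $P,Q$ be distinct points of $\mathbb R^2$ such that the closed segments $[P,Q]$ and $[-P,-Q]$ are contained in $\partial\mathcal C$. Let $\mathcal T$ be the open convex hull of $P,Q,-P,-Q$. Then for every $R>0$: (1) $\mathcal B_{\mathcal C}(0,R)\cap P0Q=\mathcal B_{\mathcal T}(0,R)\cap P0Q$; (2) $\mu_{\mathcal C}\big(\mathcal B_{\mathcal C}(0,R)\cap P0Q\big)\le 2\pi R^2$.
   Context: Let $\mathcal C\subset\mathbb R^m$ be a nonempty open bounded convex set. For distinct $p,q\in\mathcal C$, let $a,b$ be the intersection points of the straight line through $p,q$ with $\partial\mathcal C$, labelled so that $p=(1-s)a+sb$ and $q=(1-t)a+tb$ with $0<s<t<1$; the Hilbert metric is $d_{\mathcal C}(p,q)=\frac12\ln\!\big(\frac{1-s}{s}\cdot\frac{t}{1-t}\big)$, and $d_{\mathcal C}(p,p)=0$. The associated Finsler norm at $p\in\mathcal C$ is $F_{\mathcal C}(p,v)=\frac12\big(\frac1{t^-}+\frac1{t^+}\big)$ for $v\neq0$, where $t^\pm>0$ are the unique numbers with $p-t^-v\in\partial\mathcal C$ and $p+t^+v\in\partial\mathcal C$, and $F_{\mathcal C}(p,0)=0$. Let $B_{\mathcal C}(p)=\{v\in\mathbb R^m : F_{\mathcal C}(p,v)<1\}$, let $\mathrm{vol}$ be Lebesgue measure on $\mathbb R^m$ and $\omega_m$ the Lebesgue volume of the Euclidean unit ball (so $\omega_2=\pi$).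 The Hilbert measure is $\mu_{\mathcal C}(A)=\int_A\frac{\omega_m}{\mathrm{vol}(B_{\mathcal C}(p))}\,d\mathrm{vol}(p)$ for Borel $A\subset\mathcal C$. When $0\in\mathcal C$ and $R>0$, $\mathcal B_{\mathcal C}(0,R)=\{p\in\mathcal C : d_{\mathcal C}(0,p)<R\}$ denotes the open metric ball. The same notation applies to the open convex set $\mathcal T$. For three distinct points $a,b,c\in\mathbb R^2$, $abc$ denotes their open convex hull (open triangle); so $P0Q$ is the open triangle with vertices $P$, $0$, $Q$. *)

theory Defs
  imports "HOL-Analysis.Analysis"
begin

definition hilbert_dist :: "'a::euclidean_space set \<Rightarrow> 'a \<Rightarrow> 'a \<Rightarrow> real" where
  "hilbert_dist C p q =
     (if p = q then 0 else
       (THE d. \<exists>a b s t. a \<in> frontier C \<and> b \<in> frontier C \<and>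
          0 < s \<and> s < t \<and> t < 1 \<and>
          p = (1 - s) *\<^sub>R a + s *\<^sub>R b \<and> q = (1 - t) *\<^sub>R a + t *\<^sub>R b \<and>
          d = (1/2) * ln (((1 - s) / s) * (t / (1 - t)))))"

definition hilbert_finsler :: "'a::euclidean_space set \<Rightarrow> 'a \<Rightarrow> 'a \<Rightarrow> real" where
  "hilbert_finsler C p v =
     (if v = 0 then 0 else
       (1/2) * (1 / (THE t. 0 < t \<and> p - t *\<^sub>R v \<in> frontier C)
              + 1 / (THE t. 0 < t \<and> p + t *\<^sub>R v \<in> frontier C)))"

definition finsler_ball :: "'a::euclidean_space set \<Rightarrow> 'a \<Rightarrow> 'a set" where
  "finsler_ball C p = {v. hilbert_finsler C p v < 1}"

definition unit_ball_vol :: "'a::euclidean_space itself \<Rightarrow> real" where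
  "unit_ball_vol _ = measure lebesgue (ball (0::'a) 1)"

definition hilbert_measure :: "'a::euclidean_space set \<Rightarrow> 'a set \<Rightarrow> ennreal" where
  "hilbert_measure C A =
     (\<integral>\<^sup>+ p. indicator A p *
        ennreal (unit_ball_vol TYPE('a) / measure lebesgue (finsler_ball C p)) \<partial>lebesgue)"

definition hilbert_ball :: "'a::euclidean_space set \<Rightarrow> 'a \<Rightarrow> real \<Rightarrow> 'a set" where
  "hilbert_ball C x R = {p \<in> C. hilbert_dist C x p < R}"

definition open_triangle :: "'a::euclidean_space \<Rightarrow> 'a \<Rightarrow> 'a \<Rightarrow> 'a set" where
  "open_triangle a b c = interior (convex hull {a, b, c})"

end

theory Submission
  imports Defs
begin


lemma ray_unique:
  fixes D :: "'a::euclidean_space set"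
  assumes "open D" "convex D" "p \<in> D" "0 < t1" "0 < t2"
    "p + t1 *\<^sub>R v \<in> frontier D" "p + t2 *\<^sub>R v \<in> frontier D"
  shows "t1 = t2"
proof (rule ccontr)
  assume ne: "t1 \<noteq> t2"
  have fr: "frontier D \<inter> D = {}" using assms(1) by (auto simp: frontier_def interior_open)
  have key: False if "0 < a" "a < b" "p + a *\<^sub>R v \<in> frontier D" "p + b *\<^sub>R v \<in> frontier D" for a b
  proof -
    have "p + b *\<^sub>R v \<in> closure D" using that(4) frontier_def by blast
    hence "open_segment p (p + b *\<^sub>R v) \<subseteq> interior D"
      using in_interior_closure_convex_segment[OF assms(2)] assms(1,3) interior_open by blast
    moreover have "v \<noteq> 0" using that fr assms(3) by auto
    hence "p + a *\<^sub>R v \<in> open_segment p (p + b *\<^sub>R v)"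
      using that(1,2) unfolding open_segment_def closed_segment_def
      apply auto
      apply (rule exI[of _ "a/b"]) apply (auto simp: algebra_simps)
      done
    ultimately show False using that(3) fr assms(1) interior_open by auto
  qed
  show False
    using ne key[of t1 t2] key[of t2 t1] assms by (cases "t1 < t2") auto
qed

lemma frontier_disj: "open D \<Longrightarrow> x \<in> frontier D \<Longrightarrow> x \<notin> D"
  by (auto simp: frontier_def interior_open)

lemma ray_exists:
  fixes D :: "'a::euclidean_space set"
  assumes "open D" "bounded D" "p \<in> D" "v \<noteq> 0"
  shows "\<exists>t>0. p + t *\<^sub>R v \<in> frontier D"
proof -
  obtain B where B: "\<And>x. x \<in> D \<Longrightarrow> norm x \<le> B" using assms(2) bounded_iff by blast
  define M where "M = (\<bar>B\<bar> + norm p + 1) / norm v"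
  have Mpos: "M > 0" unfolding M_def using assms(4) by (intro divide_pos_pos) (auto intro: add_nonneg_pos)
  define q where "q = p + M *\<^sub>R v"
  have "norm (M *\<^sub>R v) = \<bar>B\<bar> + norm p + 1" using assms(4) Mpos by (simp add: M_def)
  moreover have "norm (M *\<^sub>R v) \<le> norm q + norm p" unfolding q_def
    by (metis add_diff_cancel_left' norm_triangle_ineq4 add.commute)
  ultimately have "norm q > B" by linarith
  hence qn: "q \<notin> D" using B by force
  have "closed_segment p q \<inter> frontier D \<noteq> {}"
    by (rule connected_Int_frontier) (use assms(3) qn in auto)
  then obtain x where x: "x \<in> closed_segment p q" "x \<in> frontier D" by blast
  then obtain u where u: "0 \<le> u" "u \<le> 1" "x = (1 - u) *\<^sub>R p + u *\<^sub>R q"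
    unfolding closed_segment_def by blast
  have xe: "x = p + (u * M) *\<^sub>R v" using u(3) by (simp add: q_def algebra_simps)
  have "u \<noteq> 0" using x(2) u(3) frontier_disj[OF assms(1)] assms(3) by auto
  hence "u * M > 0" using u(1) Mpos by simp
  thus ?thesis using x(2) xe by blast
qed

lemma ray_gt:
  fixes D :: "'a::euclidean_space set"
  assumes "open D" "convex D" "p \<in> D" "0 < t" "p + t *\<^sub>R v \<in> frontier D" "0 \<le> s" "p + s *\<^sub>R v \<in> D"
  shows "s < t"
proof (rule ccontr)
  assume "\<not> s < t"
  hence ts: "t \<le> s" by simp
  have "p + t *\<^sub>R v \<in> closed_segment p (p + s *\<^sub>R v)"
    unfolding closed_segment_def using ts assms(4)
    by (auto intro!: exI[of _ "t/s"] simp: algebra_simps)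
  moreover have "closed_segment p (p + s *\<^sub>R v) \<subseteq> D"
    using assms(2,3,7) closed_segment_subset by blast
  ultimately show False using frontier_disj[OF assms(1) assms(5)] by blast
qed

lemma the_ray:
  fixes D :: "'a::euclidean_space set"
  assumes "open D" "bounded D" "convex D" "p \<in> D" "v \<noteq> 0" "p + v \<in> D"
  shows "(THE t. 0 < t \<and> p + t *\<^sub>R v \<in> frontier D) > 1"
proof -
  obtain t where t: "0 < t" "p + t *\<^sub>R v \<in> frontier D" using ray_exists assms by blast
  have "(THE t. 0 < t \<and> p + t *\<^sub>R v \<in> frontier D) = t"
    apply (rule the_equality) using t ray_unique[OF assms(1,3,4)] by blast+
  moreover have "1 < t" using ray_gt[OF assms(1,3,4) t, of 1] assms(6) by simp
  ultimately show ?thesis by simp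
qed

lemma finsler_lt1:
  fixes D :: "'a::euclidean_space set"
  assumes "open D" "bounded D" "convex D" "p \<in> D" "p + v \<in> D" "p - v \<in> D"
  shows "hilbert_finsler D p v < 1"
proof (cases "v = 0")
  case True thus ?thesis by (simp add: hilbert_finsler_def)
next
  case False
  have a: "(THE t. 0 < t \<and> p + t *\<^sub>R v \<in> frontier D) > 1"
    using the_ray[OF assms(1-4) False assms(5)] .
  have "(THE t. 0 < t \<and> p + t *\<^sub>R (-v) \<in> frontier D) > 1"
    using the_ray[OF assms(1-4), of "-v"] False assms(6) by simp
  hence b: "(THE t. 0 < t \<and> p - t *\<^sub>R v \<in> frontier D) > 1" by simp
  define x where "x = (THE t. 0 < t \<and> p - t *\<^sub>R v \<in> frontier D)"
  define y where "y = (THE t. 0 < t \<and> p + t *\<^sub>R v \<in> frontier D)"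
  have "1 / x < 1" "1 / y < 1" using a b x_def y_def by auto
  hence "1 / x + 1 / y < 2" by linarith
  hence "(1/2) * (1 / x + 1 / y) < 1" by simp
  thus ?thesis using False by (simp add: hilbert_finsler_def x_def y_def)
qed

lemma hdist_formula:
  fixes D :: "'a::euclidean_space set"
  assumes "open D" "bounded D" "convex D" "0 \<in> D" "p \<in> D" "p \<noteq> 0" "0 < c"
    "c *\<^sub>R p \<in> frontier D" "(-c) *\<^sub>R p \<in> frontier D"
  shows "hilbert_dist D 0 p = (1/2) * ln ((c + 1) / (c - 1))"
proof -
  have c1: "1 < c" using ray_gt[OF assms(1,3,4,7), of p 1] assms(5,8) by simp
  define t where "t = (1 + 1/c) / 2"
  have t: "1/2 < t" "t < 1" using c1 assms(7) by (auto simp: t_def field_simps)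
  have tt: "t / (1 - t) = (c + 1) / (c - 1)" using c1 by (simp add: t_def field_simps)
  have ex: "(-c) *\<^sub>R p \<in> frontier D \<and> c *\<^sub>R p \<in> frontier D \<and> 0 < (1/2::real) \<and> 1/2 < t \<and> t < 1 \<and>
      0 = (1 - 1/2) *\<^sub>R ((-c) *\<^sub>R p) + (1/2) *\<^sub>R (c *\<^sub>R p) \<and>
      p = (1 - t) *\<^sub>R ((-c) *\<^sub>R p) + t *\<^sub>R (c *\<^sub>R p) \<and>
      (1/2) * ln ((c + 1) / (c - 1)) = (1/2) * ln (((1 - 1/2) / (1/2)) * (t / (1 - t)))"
  proof (intro conjI)
    have "(1 - t) *\<^sub>R ((-c) *\<^sub>R p) + t *\<^sub>R (c *\<^sub>R p) = ((1 - t) * (-c) + t * c) *\<^sub>R p"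
      by (simp only: scaleR_scaleR scaleR_add_left)
    also have "(1 - t) * (-c) + t * c = (2*t - 1) * c" by (simp add: algebra_simps)
    also have "(2*t - 1) * c = 1" using assms(7) by (simp add: t_def field_simps)
    finally show "p = (1 - t) *\<^sub>R ((-c) *\<^sub>R p) + t *\<^sub>R (c *\<^sub>R p)" by simp
  qed (use assms t tt in \<open>simp_all\<close>)
  have uniq: "d = (1/2) * ln ((c + 1) / (c - 1))"
    if "\<exists>a b s t. a \<in> frontier D \<and> b \<in> frontier D \<and>
          0 < s \<and> s < t \<and> t < 1 \<and>
          0 = (1 - s) *\<^sub>R a + s *\<^sub>R b \<and> p = (1 - t) *\<^sub>R a + t *\<^sub>R b \<and>
          d = (1/2) * ln (((1 - s) / s) * (t / (1 - t)))" for d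
  proof -
    from that obtain a b s t' where h: "a \<in> frontier D" "b \<in> frontier D"
          "0 < s" "s < t'" "t' < 1"
          "0 = (1 - s) *\<^sub>R a + s *\<^sub>R b" "p = (1 - t') *\<^sub>R a + t' *\<^sub>R b"
          "d = (1/2) * ln (((1 - s) / s) * (t' / (1 - t')))" by blast
    have pe: "p = (t' - s) *\<^sub>R (b - a)"
    proof -
      have "p = ((1 - t') *\<^sub>R a + t' *\<^sub>R b) - ((1 - s) *\<^sub>R a + s *\<^sub>R b)" using h(6,7) by simp
      also have "\<dots> = (t' - s) *\<^sub>R (b - a)" by (simp add: algebra_simps)
      finally show ?thesis .
    qed
    have be: "b = (1 - s) *\<^sub>R (b - a)"
    proof -
      have "b = (1 - s) *\<^sub>R (b - a) + ((1 - s) *\<^sub>R a + s *\<^sub>R b)" by (simp add: algebra_simps)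
      thus ?thesis using h(6) by simp
    qed
    have ae: "a = (-s) *\<^sub>R (b - a)"
    proof -
      have "a = (-s) *\<^sub>R (b - a) + ((1 - s) *\<^sub>R a + s *\<^sub>R b)" by (simp add: algebra_simps)
      thus ?thesis using h(6) by simp
    qed
    have ts: "t' - s > 0" using h by simp
    have bp: "b = 0 + ((1 - s) / (t' - s)) *\<^sub>R p" using be pe ts by simp
    have ap: "a = 0 + (s / (t' - s)) *\<^sub>R (-p)" using ae pe ts by simp
    have b1: "(1 - s) / (t' - s) = c"
    proof (rule ray_unique[OF assms(1,3,4), of _ _ p])
      show "0 < (1 - s) / (t' - s)" using h(4,5) ts by simp
      show "0 + ((1 - s) / (t' - s)) *\<^sub>R p \<in> frontier D" using bp h(2) by metis
      show "0 + c *\<^sub>R p \<in> frontier D" using assms(8) by simp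
    qed (use assms(7) in simp)
    have a1: "s / (t' - s) = c"
    proof (rule ray_unique[OF assms(1,3,4), of _ _ "-p"])
      show "0 < s / (t' - s)" using h(3) ts by simp
      show "0 + (s / (t' - s)) *\<^sub>R (-p) \<in> frontier D" using ap h(1) by metis
      show "0 + c *\<^sub>R (-p) \<in> frontier D" using assms(9) by simp
    qed (use assms(7) in simp)
    have "(1 - s) / (t' - s) = s / (t' - s)" using a1 b1 by simp
    hence "1 - s = s" using ts by (simp add: divide_cancel_right)
    hence s2: "s = 1/2" by simp
    have "c * (2 * t' - 1) = 1" using a1 s2 ts by (simp add: divide_eq_eq)
    hence "1/2 = c * (t' - 1/2)" by (simp add: algebra_simps)
    hence "t' = 1/2 + 1/(2*c)" using assms(7) by (simp add: field_simps)
    hence "t' = t" by (simp add: t_def field_simps)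
    thus ?thesis using h(8) s2 tt by simp
  qed
  have "hilbert_dist D 0 p = (THE d. \<exists>a b s t. a \<in> frontier D \<and> b \<in> frontier D \<and>
          0 < s \<and> s < t \<and> t < 1 \<and>
          0 = (1 - s) *\<^sub>R a + s *\<^sub>R b \<and> p = (1 - t) *\<^sub>R a + t *\<^sub>R b \<and>
          d = (1/2) * ln (((1 - s) / s) * (t / (1 - t))))"
    using assms(6) by (simp add: hilbert_dist_def)
  also have "\<dots> = (1/2) * ln ((c + 1) / (c - 1))"
    apply (rule the_equality)
    subgoal using ex by blast
    subgoal for d using uniq by blast
    done
  finally show ?thesis .
qed



definition Lm :: "real^2 \<Rightarrow> real^2 \<Rightarrow> real^2 \<Rightarrow> real^2" where
  "Lm P Q w = ((w$1 + w$2)/2) *\<^sub>R P + ((w$1 - w$2)/2) *\<^sub>R Q"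

definition Mi :: "real^2 \<Rightarrow> real^2 \<Rightarrow> real^2 \<Rightarrow> real^2" where
  "Mi P Q p = (let dd = P$1*Q$2 - P$2*Q$1; u1 = (p$1*Q$2 - p$2*Q$1)/dd; u2 = (P$1*p$2 - P$2*p$1)/dd
     in vector [u1 + u2, u1 - u2])"

lemma linear_Lm: "linear (Lm P Q)"
  unfolding Lm_def by (rule linearI) (simp_all add: algebra_simps add_divide_distrib diff_divide_distrib)

lemma Lm_vec: "Lm P Q (vector [a, b]) = ((a + b)/2) *\<^sub>R P + ((a - b)/2) *\<^sub>R Q"
  by (simp add: Lm_def)

lemma det_Lm: "det (matrix (Lm P Q)) = (Q$1*P$2 - P$1*Q$2)/2"
  by (simp add: det_2 matrix_def Lm_def axis_def field_simps)

lemma Lm_vec2: "Lm P Q (vector [a + b, a - b]) = a *\<^sub>R P + b *\<^sub>R Q"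
  by (simp add: Lm_def)

lemma Lm_Mi: assumes "P$1*Q$2 - P$2*Q$1 \<noteq> 0" shows "Lm P Q (Mi P Q p) = p"
proof -
  let ?d = "P$1*Q$2 - P$2*Q$1"
  have "Lm P Q (Mi P Q p) = ((p$1*Q$2 - p$2*Q$1)/?d) *\<^sub>R P + ((P$1*p$2 - P$2*p$1)/?d) *\<^sub>R Q"
    unfolding Mi_def Let_def by (rule Lm_vec2)
  also have "\<dots> = p"
    using assms by (simp add: vec_eq_iff forall_2 divide_simps) (simp add: algebra_simps)
  finally show ?thesis .
qed

lemma Mi_Lm: assumes "P$1*Q$2 - P$2*Q$1 \<noteq> 0" shows "Mi P Q (Lm P Q w) = w"
proof -
  let ?d = "P$1*Q$2 - P$2*Q$1"
  let ?u1 = "(w$1 + w$2)/2" and ?u2 = "(w$1 - w$2)/2"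
  have e1: "((?u1 *\<^sub>R P + ?u2 *\<^sub>R Q)$1*Q$2 - (?u1 *\<^sub>R P + ?u2 *\<^sub>R Q)$2*Q$1)/?d = ?u1"
    using assms by (simp add: divide_simps) (simp add: algebra_simps)
  have e2: "(P$1*(?u1 *\<^sub>R P + ?u2 *\<^sub>R Q)$2 - P$2*(?u1 *\<^sub>R P + ?u2 *\<^sub>R Q)$1)/?d = ?u2"
    using assms by (simp add: divide_simps) (simp add: algebra_simps)
  show ?thesis unfolding Mi_def Let_def Lm_def[of P Q w] e1 e2
    by (simp add: vec_eq_iff forall_2) (simp add: field_simps)
qed

lemma linear_Mi: "linear (Mi P Q)"
  unfolding Mi_def Let_def
  by (rule linearI) (simp_all add: vec_eq_iff forall_2 add_divide_distrib diff_divide_distrib algebra_simps)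



locale hsetting =
  fixes C :: "(real^2) set" and P Q :: "real^2"
  assumes opn: "open C" and bnd: "bounded C" and cvx: "convex C" and zC: "0 \<in> C"
    and PQ: "P \<noteq> Q"
    and sPQ: "closed_segment P Q \<subseteq> frontier C"
    and smPQ: "closed_segment (-P) (-Q) \<subseteq> frontier C"
begin

lemma P_fr: "P \<in> frontier C" and Q_fr: "Q \<in> frontier C"
  and mP_fr: "-P \<in> frontier C" and mQ_fr: "-Q \<in> frontier C"
  using sPQ smPQ by auto

lemma P0: "P \<noteq> 0" and Q0: "Q \<noteq> 0"
  using frontier_disj[OF opn] P_fr Q_fr zC by auto

lemma nondeg: "P$1*Q$2 - P$2*Q$1 \<noteq> 0"
proof
  assume dd: "P$1*Q$2 - P$2*Q$1 = 0"
  obtain l where l: "Q = l *\<^sub>R P"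
  proof (cases "P$1 = 0")
    case True
    hence "P$2 \<noteq> 0" using P0 by (auto simp: vec_eq_iff forall_2)
    hence "Q = (Q$2 / P$2) *\<^sub>R P" using True dd by (auto simp: vec_eq_iff forall_2)
    thus ?thesis using that by blast
  next
    case False
    hence "Q = (Q$1 / P$1) *\<^sub>R P" using dd by (auto simp: vec_eq_iff forall_2 field_simps)
    thus ?thesis using that by blast
  qed
  have "l \<noteq> 0" using l Q0 by auto
  show False
  proof (cases "l > 0")
    case True
    have "1 = l"
      by (rule ray_unique[OF opn cvx zC, of 1 l P]) (use True P_fr Q_fr l in auto)
    thus False using l PQ by simp
  next
    case False
    hence lneg: "-l > 0" using \<open>l \<noteq> 0\<close> by simp
    have "1 = -l"
      by (rule ray_unique[OF opn cvx zC, of 1 "-l" P]) (use lneg P_fr mQ_fr l in auto)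
    hence "Q = -P" using l by simp
    hence "0 = (1 - 1/2) *\<^sub>R P + (1/2::real) *\<^sub>R Q" by simp
    hence "0 \<in> closed_segment P Q" unfolding closed_segment_def
      by (intro CollectI exI[of _ "1/2"]) auto
    thus False using sPQ frontier_disj[OF opn] zC by blast
  qed
qed

abbreviation L where "L \<equiv> Lm P Q"
abbreviation M where "M \<equiv> Mi P Q"

lemma L_M: "L (M p) = p" using Lm_Mi[OF nondeg] .
lemma M_L: "M (L w) = w" using Mi_Lm[OF nondeg] .
lemma inj_L: "inj L" by (metis M_L injI)
lemma linL: "linear L" by (rule linear_Lm)

lemma conv2:
  fixes K :: "'b::real_vector set"
  assumes "convex K" "x \<in> K" "y \<in> K" "0 \<in> K" "0 \<le> a" "0 \<le> b" "a + b \<le> 1"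
  shows "a *\<^sub>R x + b *\<^sub>R y \<in> K"
proof (cases "a + b = 0")
  case True hence "a = 0" "b = 0" using assms by auto
  thus ?thesis using assms by simp
next
  case False
  hence ab: "a + b > 0" using assms by simp
  have z: "(a/(a+b)) *\<^sub>R x + (b/(a+b)) *\<^sub>R y \<in> K"
    using convexD[OF assms(1,2,3), of "a/(a+b)" "b/(a+b)"] ab assms(5,6) by (simp add: add_divide_distrib[symmetric])
  have "(a+b) *\<^sub>R ((a/(a+b)) *\<^sub>R x + (b/(a+b)) *\<^sub>R y) + (1 - (a+b)) *\<^sub>R 0 \<in> K"
    using convexD[OF assms(1) z assms(4), of "a+b" "1-(a+b)"] ab assms(7) by simp
  thus ?thesis using ab by (simp add: scaleR_add_right)
qed

lemma abs_half_aux: "\<bar>a::real\<bar> \<le> 1 \<Longrightarrow> \<bar>b\<bar> \<le> 1 \<Longrightarrow> \<bar>(a + b)/2\<bar> + \<bar>(a - b)/2\<bar> \<le> 1"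
  by (cases "a + b \<ge> 0"; cases "a - b \<ge> 0") (auto simp: abs_if field_simps)

lemma L_in_convex:
  fixes z :: "real^2"
  assumes K: "convex K" "P \<in> K" "Q \<in> K" "-P \<in> K" "-Q \<in> K" and z: "\<bar>z$1\<bar> \<le> 1" "\<bar>z$2\<bar> \<le> 1"
  shows "L z \<in> K"
proof -
  have zK: "0 \<in> K"
    using convexD[OF K(1,2,4), of "1/2" "1/2"] by simp
  define u1 where "u1 = (z$1 + z$2)/2"
  define u2 where "u2 = (z$1 - z$2)/2"
  have Lz: "L z = u1 *\<^sub>R P + u2 *\<^sub>R Q" by (simp add: Lm_def u1_def u2_def)
  define x where "x = (if u1 \<ge> 0 then P else -P)"
  define y where "y = (if u2 \<ge> 0 then Q else -Q)"
  have "u1 *\<^sub>R P = \<bar>u1\<bar> *\<^sub>R x" "u2 *\<^sub>R Q = \<bar>u2\<bar> *\<^sub>R y" by (auto simp: x_def y_def)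
  moreover have "\<bar>u1\<bar> + \<bar>u2\<bar> \<le> 1" using z unfolding u1_def u2_def by (rule abs_half_aux)
  moreover have "x \<in> K" "y \<in> K" using K by (auto simp: x_def y_def)
  ultimately show ?thesis using conv2[OF K(1) _ _ zK, of x y "\<bar>u1\<bar>" "\<bar>u2\<bar>"] Lz by simp
qed

lemma L_in_C:
  fixes z :: "real^2"
  assumes z: "\<bar>z$1\<bar> < 1" "\<bar>z$2\<bar> < 1"
  shows "L z \<in> C"
proof -
  define m where "m = (1 + max \<bar>z$1\<bar> \<bar>z$2\<bar>) / 2"
  have m: "0 < m" "m < 1" "\<bar>z$1\<bar> \<le> m" "\<bar>z$2\<bar> \<le> m" using z by (auto simp: m_def)
  define z' where "z' = (1/m) *\<^sub>R z"
  have z': "\<bar>z'$1\<bar> \<le> 1" "\<bar>z'$2\<bar> \<le> 1" using m by (auto simp: z'_def abs_mult divide_le_eq_1)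
  have "L z' \<in> closure C"
    by (rule L_in_convex[OF convex_closure[OF cvx] _ _ _ _ z'])
       (use P_fr Q_fr mP_fr mQ_fr frontier_def in auto)
  hence "L z' - (1 - m) *\<^sub>R (L z' - 0) \<in> interior C"
    using mem_interior_closure_convex_shrink[OF cvx _ _ , of 0 "L z'" "1 - m"] zC opn m interior_open by auto
  moreover have "L z' - (1 - m) *\<^sub>R (L z' - 0) = m *\<^sub>R L z'" by (simp add: algebra_simps)
  moreover have "m *\<^sub>R L z' = L z" using m
    by (simp add: z'_def linear_cmul[OF linL])
  ultimately show ?thesis using opn interior_open by auto
qed


abbreviation T where "T \<equiv> interior (convex hull {P, Q, -P, -Q})"

lemma T_open: "open T" by simp
lemma T_convex: "convex T" by (simp add: convex_interior)
lemma T_bounded: "bounded T"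
  by (rule bounded_subset[OF _ interior_subset]) (simp add: bounded_convex_hull finite_imp_bounded)

lemma L0: "L 0 = 0" using linear_0[OF linL] .

lemma L_eq0: "L w = 0 \<longleftrightarrow> w = 0"
  using inj_L L0 by (metis injD)

lemma L_in_hull:
  fixes z :: "real^2"
  assumes "\<bar>z$1\<bar> \<le> 1" "\<bar>z$2\<bar> \<le> 1"
  shows "L z \<in> convex hull {P, Q, -P, -Q}"
  by (rule L_in_convex[OF convex_convex_hull _ _ _ _ assms]) (auto intro: hull_inc)

lemma open_L_image: "open S \<Longrightarrow> open (L ` S)"
  using interior_injective_linear_image[OF linL inj_L, of S]
  by (metis interior_open open_interior)

lemma L_in_T:
  fixes z :: "real^2"
  assumes z: "\<bar>z$1\<bar> < 1" "\<bar>z$2\<bar> < 1"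
  shows "L z \<in> T"
proof -
  let ?S = "box (-1) (1::real^2)"
  have zS: "z \<in> ?S" using z by (auto simp: mem_box_cart forall_2 abs_less_iff)
  have "L ` ?S \<subseteq> convex hull {P, Q, -P, -Q}"
  proof
    fix y assume "y \<in> L ` ?S"
    then obtain x where "x \<in> ?S" "y = L x" by blast
    thus "y \<in> convex hull {P, Q, -P, -Q}"
      by (auto intro!: L_in_hull simp: mem_box_cart forall_2 abs_less_iff)
  qed
  hence "L ` ?S \<subseteq> T" by (intro interior_maximal open_L_image) auto
  thus ?thesis using zS by blast
qed

lemma zT: "0 \<in> T" using L_in_T[of 0] L0 by simp

lemma hull_sub: "convex hull {P, Q, -P, -Q} \<subseteq> L ` cbox (-1) 1"
proof (rule hull_minimal)
  show "convex (L ` cbox (-1) 1)" by (rule convex_linear_image[OF linL convex_box(1)])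
  have "P = L (vector [1, 1])" "Q = L (vector [1, -1])" "-P = L (vector [-1, -1])" "-Q = L (vector [-1, 1])"
    by (simp_all add: Lm_vec)
  moreover have "vector [1, 1] \<in> cbox (-1) (1::real^2)" "vector [1, -1] \<in> cbox (-1) (1::real^2)"
     "vector [-1, -1] \<in> cbox (-1) (1::real^2)" "vector [-1, 1] \<in> cbox (-1) (1::real^2)"
    by (auto simp: mem_box_cart forall_2)
  ultimately show "{P, Q, -P, -Q} \<subseteq> L ` cbox (-1) 1" by blast
qed

lemma perturb:
  fixes x :: "'b::real_normed_vector"
  assumes "x \<in> interior S"
  shows "\<exists>d>0. x + d *\<^sub>R E \<in> S \<and> x - d *\<^sub>R E \<in> S"
proof -
  obtain e where e: "e > 0" "ball x e \<subseteq> S" using assms mem_interior by blast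
  define d where "d = e / (norm E + 1)"
  have d: "d > 0" using e by (simp add: d_def add_nonneg_pos)
  have "norm (d *\<^sub>R E) < e"
  proof -
    have "norm (d *\<^sub>R E) = d * norm E" using d by simp
    also have "\<dots> < d * (norm E + 1)" using d by simp
    also have "\<dots> = e" using add_nonneg_pos[OF norm_ge_zero zero_less_one, of E] by (simp add: d_def)
    finally show ?thesis .
  qed
  hence "x + d *\<^sub>R E \<in> ball x e" "x - d *\<^sub>R E \<in> ball x e"
    by (auto simp: dist_norm)
  thus ?thesis using e d by blast
qed

lemma frontier_pts:
  assumes c: "\<bar>c\<bar> \<le> 1"
  shows "L (vector [1, c]) \<in> frontier C" "L (vector [-1, -c]) \<in> frontier C"
    "L (vector [1, c]) \<in> frontier T" "L (vector [-1, -c]) \<in> frontier T"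
proof -
  have e1: "L (vector [1, c]) = (1 - (1 - c)/2) *\<^sub>R P + ((1 - c)/2) *\<^sub>R Q"
    by (simp add: Lm_vec field_simps)
  have "L (vector [1, c]) \<in> closed_segment P Q"
    unfolding closed_segment_def e1 using c by (intro CollectI exI[of _ "(1 - c)/2"]) auto
  thus "L (vector [1, c]) \<in> frontier C" using sPQ by blast
  have vv: "vector [-1, -c] = - (vector [1, c] :: real^2)" by (simp add: vec_eq_iff forall_2)
  have e2: "L (vector [-1, -c]) = (1 - (1 - c)/2) *\<^sub>R (-P) + ((1 - c)/2) *\<^sub>R (-Q)"
    unfolding vv linear_neg[OF linL] e1 by (simp add: algebra_simps)
  have "L (vector [-1, -c]) \<in> closed_segment (-P) (-Q)"
    unfolding closed_segment_def e2 using c by (intro CollectI exI[of _ "(1 - c)/2"]) auto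
  thus "L (vector [-1, -c]) \<in> frontier C" using smPQ by blast
  have clT: "closure T = convex hull {P, Q, -P, -Q}"
    using convex_closure_interior[OF convex_convex_hull, of "{P, Q, -P, -Q}"] zT
    by (metis closure_closed compact_convex_hull compact_imp_closed empty_iff finite.emptyI
        finite.insertI finite_imp_compact)
  have Tsub: "T \<subseteq> interior (L ` cbox (-1) 1)" using hull_sub by (rule interior_mono)
  let ?E = "L (vector [1, 0])"
  have lin: "L x + d *\<^sub>R L y = L (x + d *\<^sub>R y)" "L x - d *\<^sub>R L y = L (x - d *\<^sub>R y)" for x y d
    using linL by (simp_all add: linear_add linear_diff linear_cmul)
  have in1: "L (vector [1, c]) \<in> closure T" using clT L_in_hull[of "vector [1, c]"] c by simp
  have "L (vector [1, c]) \<notin> T"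
  proof
    assume "L (vector [1, c]) \<in> T"
    then obtain d where d: "d > 0" "L (vector [1, c]) + d *\<^sub>R ?E \<in> L ` cbox (-1) 1"
      using perturb Tsub by blast
    hence "L (vector [1, c] + d *\<^sub>R vector [1, 0]) \<in> L ` cbox (-1) 1" using lin by simp
    hence "vector [1, c] + d *\<^sub>R vector [1, 0] \<in> cbox (-1) (1::real^2)"
      using inj_L by (auto dest: injD)
    thus False using d by (auto simp: mem_box_cart forall_2)
  qed
  thus "L (vector [1, c]) \<in> frontier T" using in1 by (simp add: frontier_def)
  have in2: "L (vector [-1, -c]) \<in> closure T" using clT L_in_hull[of "vector [-1, -c]"] c by simp
  have "L (vector [-1, -c]) \<notin> T"
  proof
    assume "L (vector [-1, -c]) \<in> T"
    then obtain d where d: "d > 0" "L (vector [-1, -c]) - d *\<^sub>R ?E \<in> L ` cbox (-1) 1"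
      using perturb Tsub by blast
    hence "L (vector [-1, -c] - d *\<^sub>R vector [1, 0]) \<in> L ` cbox (-1) 1" using lin by simp
    hence "vector [-1, -c] - d *\<^sub>R vector [1, 0] \<in> cbox (-1) (1::real^2)"
      using inj_L by (auto dest: injD)
    thus False using d by (auto simp: mem_box_cart forall_2)
  qed
  thus "L (vector [-1, -c]) \<in> frontier T" using in2 by (simp add: frontier_def)
qed

definition Tri :: "(real^2) set" where "Tri = {w. \<bar>w$2\<bar> \<le> w$1 \<and> w$1 \<le> 1}"

lemma convex_Tri: "convex Tri"
proof (rule convexI)
  fix x y :: "real^2" and u v :: real
  assume h: "x \<in> Tri" "y \<in> Tri" "0 \<le> u" "0 \<le> v" "u + v = 1"
  have "\<bar>u * x$2 + v * y$2\<bar> \<le> u * \<bar>x$2\<bar> + v * \<bar>y$2\<bar>"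
    using h(3,4) abs_triangle_ineq[of "u * x$2" "v * y$2"] by (simp add: abs_mult)
  also have "\<dots> \<le> u * x$1 + v * y$1"
    using h unfolding Tri_def by (intro add_mono mult_left_mono) auto
  finally have a: "\<bar>u * x$2 + v * y$2\<bar> \<le> u * x$1 + v * y$1" .
  have "u * x$1 + v * y$1 \<le> u * 1 + v * 1"
    using h unfolding Tri_def by (intro add_mono mult_left_mono) auto
  hence b: "u * x$1 + v * y$1 \<le> 1" using h(5) by simp
  show "u *\<^sub>R x + v *\<^sub>R y \<in> Tri" using a b by (simp add: Tri_def)
qed

lemma tri_sub: "open_triangle P 0 Q \<subseteq> L ` {w. \<bar>w$2\<bar> < w$1 \<and> w$1 < 1}"
proof
  fix p assume p: "p \<in> open_triangle P 0 Q"
  have "convex hull {P, 0, Q} \<subseteq> L ` Tri"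
  proof (rule hull_minimal)
    show "convex (L ` Tri)" by (rule convex_linear_image[OF linL convex_Tri])
    have "P = L (vector [1, 1])" "Q = L (vector [1, -1])" "0 = L 0"
      by (simp_all add: Lm_vec L0)
    moreover have "vector [1, 1] \<in> Tri" "vector [1, -1] \<in> Tri" "0 \<in> Tri"
      by (auto simp: Tri_def)
    ultimately show "{P, 0, Q} \<subseteq> L ` Tri" by blast
  qed
  hence pi: "p \<in> interior (L ` Tri)" using p interior_mono unfolding open_triangle_def by blast
  then obtain w where w: "w \<in> Tri" "p = L w" using interior_subset by blast
  obtain d where d: "d > 0" "p + d *\<^sub>R L (vector [1, 0]) \<in> L ` Tri" "p - d *\<^sub>R L (vector [1, 0]) \<in> L ` Tri"
    using perturb[OF pi] by blast
  have lin: "L x + d *\<^sub>R L y = L (x + d *\<^sub>R y)" "L x - d *\<^sub>R L y = L (x - d *\<^sub>R y)" for x y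
    using linL by (simp_all add: linear_add linear_diff linear_cmul)
  have img: "x \<in> Tri" if "L x \<in> L ` Tri" for x
    using that inj_L by (auto simp: inj_image_mem_iff)
  have "w + d *\<^sub>R vector [1, 0] \<in> Tri" "w - d *\<^sub>R vector [1, 0] \<in> Tri"
    by (rule img, use d(2) w(2) lin in simp) (rule img, use d(3) w(2) lin in simp)
  hence "w$1 + d \<le> 1" "\<bar>w$2\<bar> \<le> w$1 - d" by (auto simp: Tri_def)
  thus "p \<in> L ` {w. \<bar>w$2\<bar> < w$1 \<and> w$1 < 1}" using d(1) w(2) by auto
qed

lemma tri_in_C: "open_triangle P 0 Q \<subseteq> C" and tri_in_T: "open_triangle P 0 Q \<subseteq> T"
  using tri_sub L_in_C L_in_T by fastforce+

lemma dist_formula: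
  fixes w :: "real^2"
  assumes w: "\<bar>w$2\<bar> < w$1" "w$1 < 1"
  shows "hilbert_dist C 0 (L w) = (1/2) * ln ((1/w$1 + 1) / (1/w$1 - 1))"
    "hilbert_dist T 0 (L w) = (1/2) * ln ((1/w$1 + 1) / (1/w$1 - 1))"
proof -
  have w1: "w$1 > 0" using w by linarith
  define c where "c = 1 / w$1"
  have c: "c > 0" using w1 by (simp add: c_def)
  have cw1: "c * w$1 = 1" using w1 by (simp add: c_def)
  have cw2: "c * w$2 = w$2 / w$1" by (simp add: c_def)
  have cw: "c *\<^sub>R w = vector [1, w$2 / w$1]"
    unfolding vec_eq_iff forall_2 by (simp only: vector_scaleR_component real_scaleR_def cw1 cw2 vector_2 simp_thms)
  have cw': "(-c) *\<^sub>R w = vector [-1, - (w$2 / w$1)]"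
    unfolding vec_eq_iff forall_2 by (simp only: vector_scaleR_component real_scaleR_def cw1 cw2 vector_2 mult_minus_left simp_thms)
  have q: "\<bar>w$2 / w$1\<bar> \<le> 1" using w w1 by (simp add: abs_div)
  have e1: "c *\<^sub>R L w = L (vector [1, w$2 / w$1])" unfolding cw[symmetric] linear_cmul[OF linL] ..
  have e2: "(-c) *\<^sub>R L w = L (vector [-1, - (w$2 / w$1)])" unfolding cw'[symmetric] linear_cmul[OF linL] ..
  have "w \<noteq> 0" using w1 by (metis zero_index less_irrefl)
  hence ne: "L w \<noteq> 0" by (simp only: L_eq0 not_False_eq_True)
  have wa: "\<bar>w$1\<bar> < 1" "\<bar>w$2\<bar> < 1" using w w1 by auto
  have f1: "c *\<^sub>R L w \<in> frontier C" "(-c) *\<^sub>R L w \<in> frontier C"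
    "c *\<^sub>R L w \<in> frontier T" "(-c) *\<^sub>R L w \<in> frontier T"
    unfolding e1 e2 using frontier_pts[OF q] by auto
  show "hilbert_dist C 0 (L w) = (1/2) * ln ((1/w$1 + 1) / (1/w$1 - 1))"
    using hdist_formula[OF opn bnd cvx zC L_in_C[OF wa] ne c f1(1,2)] unfolding c_def .
  show "hilbert_dist T 0 (L w) = (1/2) * ln ((1/w$1 + 1) / (1/w$1 - 1))"
    using hdist_formula[OF T_open T_bounded T_convex zT L_in_T[OF wa] ne c f1(3,4)] unfolding c_def .
qed

lemma part1: "hilbert_ball C 0 R \<inter> open_triangle P 0 Q = hilbert_ball T 0 R \<inter> open_triangle P 0 Q"
proof -
  have "p \<in> hilbert_ball C 0 R \<longleftrightarrow> p \<in> hilbert_ball T 0 R" if p: "p \<in> open_triangle P 0 Q" for p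
  proof -
    obtain w where w: "\<bar>w$2\<bar> < w$1" "w$1 < 1" "p = L w" using p tri_sub by blast
    show ?thesis using dist_formula[OF w(1,2)] w(3) p tri_in_C tri_in_T
      unfolding hilbert_ball_def by auto
  qed
  thus ?thesis by blast
qed

end


lemma Basis_2: "(Basis :: (real^2) set) = {axis 1 1, axis 2 1}"
  by (auto simp: Basis_vec_def UNIV_2)

lemma axis12: "axis 1 (1::real) \<noteq> (axis 2 1 :: real^2)"
  by (simp add: axis_eq_axis)

lemma measure_box2:
  fixes a b :: real
  assumes "0 < a" "0 < b"
  shows "measure lebesgue (box (- vector [a, b]) (vector [a, b] :: real^2)) = 4 * a * b"
proof -
  have "measure lebesgue (box (- vector [a, b]) (vector [a, b] :: real^2))
      = measure lborel (box (- vector [a, b]) (vector [a, b] :: real^2))"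
    by (rule measure_completion) simp
  also have "\<dots> = 4 * a * b"
    using assms by (simp add: measure_lborel_box_eq Basis_2 axis12 inner_axis)
  finally show ?thesis .
qed

lemma ubv: "Defs.unit_ball_vol TYPE(real^2) = pi"
proof -
  have "Defs.unit_ball_vol TYPE(real^2) = measure lborel (ball (0::real^2) 1)"
    unfolding Defs.unit_ball_vol_def by (rule measure_completion) simp
  also have "\<dots> = Ball_Volume.unit_ball_vol 2" using content_ball[where c="0::real^2" and r=1] by simp
  also have "\<dots> = pi" using unit_ball_vol_even[of 1] by simp
  finally show ?thesis .
qed

lemma cov_real:
  fixes f :: "real^2 \<Rightarrow> real" and g :: "real^2 \<Rightarrow> real^2"
  assumes "linear g"
  shows "(\<lambda>x. \<bar>det (matrix g)\<bar> * f(g x)) absolutely_integrable_on S \<and>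
           integral S (\<lambda>x. \<bar>det (matrix g)\<bar> * f(g x)) = b
     \<longleftrightarrow> f absolutely_integrable_on (g ` S) \<and> integral (g ` S) f = b"
proof -
  have "(\<lambda>x. \<bar>det (matrix g)\<bar> *\<^sub>R vec (f(g x)) :: real ^ 1) absolutely_integrable_on S \<and>
           integral S (\<lambda>x. \<bar>det (matrix g)\<bar> *\<^sub>R vec (f(g x))) = (vec b :: real ^ 1)
         \<longleftrightarrow> (\<lambda>x. vec (f x) :: real ^ 1) absolutely_integrable_on (g ` S) \<and>
           integral (g ` S) (\<lambda>x. vec (f x)) = (vec b :: real ^ 1)"
    by (rule has_absolute_integral_change_of_variables_linear[OF assms])
  thus ?thesis
    by (simp add: absolutely_integrable_on_1_iff integral_on_1_eq vec_eq_iff)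
qed

lemma measure_not_fmeas: "A \<notin> fmeasurable M \<Longrightarrow> measure M A = 0"
  by (metis (mono_tags, lifting) fmeasurable_def infinity_ennreal_def measure_notin_sets
      measure_zero_top mem_Collect_eq top.not_eq_extremum)

context hsetting
begin

lemma detL: "det (matrix L) = - (P$1*Q$2 - P$2*Q$1) / 2"
  by (simp add: det_Lm algebra_simps)

lemma detL_nz: "det (matrix L) \<noteq> 0" using nondeg by (simp add: detL)

lemma box_finsler:
  fixes w :: "real^2"
  assumes w: "\<bar>w$2\<bar> < w$1" "w$1 < 1"
  shows "L ` box (- vector [1 - w$1, 1 - \<bar>w$2\<bar>]) (vector [1 - w$1, 1 - \<bar>w$2\<bar>]) \<subseteq> finsler_ball C (L w)"
proof
  fix v assume "v \<in> L ` box (- vector [1 - w$1, 1 - \<bar>w$2\<bar>]) (vector [1 - w$1, 1 - \<bar>w$2\<bar>])"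
  then obtain z where z: "z \<in> box (- vector [1 - w$1, 1 - \<bar>w$2\<bar>]) (vector [1 - w$1, 1 - \<bar>w$2\<bar>])" "v = L z"
    by blast
  have z1: "\<bar>z$1\<bar> < 1 - w$1" and z2: "\<bar>z$2\<bar> < 1 - \<bar>w$2\<bar>"
    using z(1) by (auto simp: mem_box_cart forall_2)
  have a: "\<bar>(w + z)$1\<bar> < 1" "\<bar>(w + z)$2\<bar> < 1" "\<bar>(w - z)$1\<bar> < 1" "\<bar>(w - z)$2\<bar> < 1"
    using z1 z2 w by auto
  have "L w + v = L (w + z)" "L w - v = L (w - z)" using z(2) linL by (simp_all add: linear_add linear_diff)
  hence "L w + v \<in> C" "L w - v \<in> C" using L_in_C a by auto
  moreover have "L w \<in> C" using L_in_C w by auto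
  ultimately show "v \<in> finsler_ball C (L w)"
    unfolding finsler_ball_def using finsler_lt1[OF opn bnd cvx] by blast
qed

lemma density_bound:
  fixes w :: "real^2"
  assumes w: "\<bar>w$2\<bar> < w$1" "w$1 < 1"
  shows "Defs.unit_ball_vol TYPE(real^2) / measure lebesgue (finsler_ball C (L w))
          \<le> pi / (\<bar>det (matrix L)\<bar> * (4 * (1 - w$1) * (1 - \<bar>w$2\<bar>)))"
proof -
  let ?B = "box (- vector [1 - w$1, 1 - \<bar>w$2\<bar>]) (vector [1 - w$1, 1 - \<bar>w$2\<bar>]) :: (real^2) set"
  have ab: "0 < 1 - w$1" "0 < 1 - \<bar>w$2\<bar>" using w by auto
  have mK: "measure lebesgue (L ` ?B) = \<bar>det (matrix L)\<bar> * (4 * (1 - w$1) * (1 - \<bar>w$2\<bar>))"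
    using measure_linear_image[OF linL lmeasurable_box] measure_box2[OF ab] by simp
  have pos: "0 < \<bar>det (matrix L)\<bar> * (4 * (1 - w$1) * (1 - \<bar>w$2\<bar>))"
    using detL_nz ab by simp
  show ?thesis
  proof (cases "finsler_ball C (L w) \<in> fmeasurable lebesgue")
    case True
    have "measure lebesgue (L ` ?B) \<le> measure lebesgue (finsler_ball C (L w))"
      by (rule measure_mono_fmeasurable[OF box_finsler[OF w] _ True])
         (use measurable_linear_image[OF linL lmeasurable_box] in auto)
    thus ?thesis unfolding ubv mK using pos by (intro divide_left_mono) auto
  next
    case False
    hence "measure lebesgue (finsler_ball C (L w)) = 0" by (rule measure_not_fmeas)
    thus ?thesis using pos by simp
  qed
qed

end



definition g1 :: "real \<Rightarrow> real \<Rightarrow> real \<Rightarrow> real" where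
  "g1 k r t = (if 0 \<le> t \<and> t \<le> r then k / (1 - t) else 0)"
definition g2 :: "real \<Rightarrow> real \<Rightarrow> real" where
  "g2 r t = (if - r \<le> t \<and> t \<le> 0 then 1 / (1 + t) else 0) + (if 0 \<le> t \<and> t \<le> r then 1 / (1 - t) else 0)"
definition GG :: "real \<Rightarrow> real \<Rightarrow> real^2 \<Rightarrow> real" where
  "GG k r w = g1 k r (w$1) * g2 r (w$2)"

lemma g1_nonneg: "0 \<le> k \<Longrightarrow> r < 1 \<Longrightarrow> 0 \<le> g1 k r t" by (simp add: g1_def)
lemma g2_nonneg: "r < 1 \<Longrightarrow> 0 \<le> g2 r t" by (simp add: g2_def)

lemma g1_meas[measurable]: "g1 k r \<in> borel_measurable borel"
  unfolding g1_def by measurable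
lemma g2_meas[measurable]: "g2 r \<in> borel_measurable borel"
  unfolding g2_def by measurable

lemma int_g1:
  assumes "0 \<le> k" "0 \<le> r" "r < 1"
  shows "(\<integral>\<^sup>+t. ennreal (g1 k r t) \<partial>lborel) = ennreal (- k * ln (1 - r))"
proof -
  have "(\<integral>\<^sup>+t. ennreal (g1 k r t) \<partial>lborel) = (\<integral>\<^sup>+t. ennreal (k / (1 - t)) * indicator {0..r} t \<partial>lborel)"
    by (intro nn_integral_cong) (auto simp: g1_def indicator_def)
  also have "\<dots> = ennreal ((\<lambda>t. - k * ln (1 - t)) r - (\<lambda>t. - k * ln (1 - t)) 0)"
  proof (rule nn_integral_FTC_Icc)
    show "(\<lambda>t. k / (1 - t)) \<in> borel_measurable borel" by measurable
    fix x assume x: "x \<in> {0..r}"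
    hence "1 - x > 0" using assms by auto
    thus "((\<lambda>t. - k * ln (1 - t)) has_real_derivative k / (1 - x)) (at x)"
      by (auto intro!: derivative_eq_intros simp: field_simps)
    show "0 \<le> k / (1 - x)" using \<open>1 - x > 0\<close> assms by simp
  qed (use assms in auto)
  finally show ?thesis by simp
qed

lemma int_g2:
  assumes "0 \<le> r" "r < 1"
  shows "(\<integral>\<^sup>+t. ennreal (g2 r t) \<partial>lborel) = ennreal (- 2 * ln (1 - r))"
proof -
  have "(\<integral>\<^sup>+t. ennreal (g2 r t) \<partial>lborel) =
     (\<integral>\<^sup>+t. ennreal (1 / (1 + t)) * indicator {-r..0} t + ennreal (1 / (1 - t)) * indicator {0..r} t \<partial>lborel)"
    using assms by (intro nn_integral_cong) (auto simp: g2_def indicator_def ennreal_plus[symmetric] simp del: ennreal_plus)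
  also have "\<dots> = (\<integral>\<^sup>+t. ennreal (1 / (1 + t)) * indicator {-r..0} t \<partial>lborel) + (\<integral>\<^sup>+t. ennreal (1 / (1 - t)) * indicator {0..r} t \<partial>lborel)"
    by (rule nn_integral_add) measurable
  also have "(\<integral>\<^sup>+t. ennreal (1 / (1 + t)) * indicator {-r..0} t \<partial>lborel) = ennreal ((\<lambda>t. ln (1 + t)) 0 - (\<lambda>t. ln (1 + t)) (-r))"
  proof (rule nn_integral_FTC_Icc)
    show "(\<lambda>t::real. 1 / (1 + t)) \<in> borel_measurable borel" by measurable
    fix x assume x: "x \<in> {-r..0}"
    hence "1 + x > 0" using assms by auto
    thus "((\<lambda>t. ln (1 + t)) has_real_derivative 1 / (1 + x)) (at x)"
      by (auto intro!: derivative_eq_intros simp: field_simps)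
    show "0 \<le> 1 / (1 + x)" using \<open>1 + x > 0\<close> by simp
  qed (use assms in auto)
  also have "(\<integral>\<^sup>+t. ennreal (1 / (1 - t)) * indicator {0..r} t \<partial>lborel) = ennreal ((\<lambda>t. - ln (1 - t)) r - (\<lambda>t. - ln (1 - t)) 0)"
  proof (rule nn_integral_FTC_Icc)
    show "(\<lambda>t::real. 1 / (1 - t)) \<in> borel_measurable borel" by measurable
    fix x assume x: "x \<in> {0..r}"
    hence "1 - x > 0" using assms by auto
    thus "((\<lambda>t. - ln (1 - t)) has_real_derivative 1 / (1 - x)) (at x)"
      by (auto intro!: derivative_eq_intros simp: field_simps)
    show "0 \<le> 1 / (1 - x)" using \<open>1 - x > 0\<close> by simp
  qed (use assms in auto)
  also have "ennreal ((\<lambda>t. ln (1 + t)) 0 - (\<lambda>t. ln (1 + t)) (-r)) + ennreal ((\<lambda>t. - ln (1 - t)) r - (\<lambda>t. - ln (1 - t)) 0)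
      = ennreal (- 2 * ln (1 - r))"
  proof -
    have "ln (1 - r) \<le> 0" using assms by simp
    thus ?thesis by (simp add: ennreal_plus[symmetric] del: ennreal_plus)
  qed
  finally show ?thesis .
qed

lemma int_GG:
  assumes "0 \<le> k" "0 \<le> r" "r < 1"
  shows "(\<integral>\<^sup>+w. ennreal (GG k r w) \<partial>lborel) = ennreal (2 * k * (ln (1 - r))^2)"
proof -
  define f where "f b t = ennreal (if b = axis 1 1 then g1 k r t else g2 r t)" for b :: "real^2" and t
  have "(\<integral>\<^sup>+w. ennreal (GG k r w) \<partial>lborel) = (\<integral>\<^sup>+x. (\<Prod>b\<in>Basis. f b (x \<bullet> b)) \<partial>lborel)"
    using assms
    by (intro nn_integral_cong) (simp add: Basis_2 axis12 axis_eq_axis f_def GG_def inner_axis ennreal_mult g1_nonneg g2_nonneg)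
  also have "\<dots> = (\<Prod>b\<in>Basis. (\<integral>\<^sup>+x. f b x \<partial>lborel))"
    by (rule nn_integral_lborel_prod) (auto simp: f_def)
  also have "\<dots> = ennreal (- k * ln (1 - r)) * ennreal (- 2 * ln (1 - r))"
    using assms by (simp add: Basis_2 axis12 axis_eq_axis f_def int_g1 int_g2)
  also have "\<dots> = ennreal (2 * k * (ln (1 - r))^2)"
  proof -
    have l: "ln (1 - r) \<le> 0" using assms by simp
    have a: "0 \<le> - k * ln (1 - r)" using l assms by (simp add: mult_nonneg_nonpos)
    have b: "0 \<le> - 2 * ln (1 - r)" using l by simp
    have "ennreal (- k * ln (1 - r)) * ennreal (- 2 * ln (1 - r)) = ennreal ((- k * ln (1 - r)) * (- 2 * ln (1 - r)))"
      using ennreal_mult[OF a b] by simp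
    also have "(- k * ln (1 - r)) * (- 2 * ln (1 - r)) = 2 * k * (ln (1 - r))^2"
      by (simp add: power2_eq_square)
    finally show ?thesis .
  qed
  finally show ?thesis .
qed



lemma GG_meas[measurable]: "GG k r \<in> borel_measurable borel"
  unfolding GG_def by measurable

lemma g2_lower:
  assumes "\<bar>t\<bar> \<le> r" "r < 1"
  shows "1 / (1 - \<bar>t\<bar>) \<le> g2 r t"
  using assms by (cases "t \<ge> 0") (auto simp: g2_def)

context hsetting
begin

lemma region:
  fixes x R :: real
  assumes "0 < x" "x < 1" "(1/2) * ln ((1/x + 1) / (1/x - 1)) < R"
  shows "x < (exp (2*R) - 1) / (exp (2*R) + 1)"
proof -
  have e: "(1/x + 1) / (1/x - 1) = (1 + x) / (1 - x)" using assms by (simp add: field_simps)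
  have pos: "(1 + x) / (1 - x) > 0" using assms by simp
  have "ln ((1 + x) / (1 - x)) < 2 * R" using assms(3) e by simp
  hence "(1 + x) / (1 - x) < exp (2 * R)" using pos by (metis exp_less_cancel_iff exp_ln)
  hence "1 + x < exp (2 * R) * (1 - x)" using assms by (simp add: divide_less_eq)
  hence "x * (exp (2*R) + 1) < exp (2*R) - 1" by (simp add: algebra_simps)
  thus ?thesis by (simp add: pos_less_divide_eq add_pos_pos)
qed

lemma part2:
  assumes R: "R > 0"
  shows "hilbert_measure C (hilbert_ball C 0 R \<inter> open_triangle P 0 Q) \<le> ennreal (2 * pi * R\<^sup>2)"
proof -
  define A where "A = hilbert_ball C 0 R \<inter> open_triangle P 0 Q"
  define E where "E = exp (2 * R)"
  define r where "r = (E - 1) / (E + 1)"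
  define dt where "dt = \<bar>det (matrix L)\<bar>"
  define k where "k = pi / (4 * dt)"
  define H where "H p = GG k r (M p)" for p
  have E1: "E > 1" using R by (simp add: E_def)
  have r: "0 \<le> r" "r < 1" using E1 by (auto simp: r_def field_simps)
  have dt: "dt > 0" using detL_nz by (simp add: dt_def)
  have k: "k \<ge> 0" using dt by (simp add: k_def)
  have Hnn: "0 \<le> H p" for p using g1_nonneg[OF k r(2)] g2_nonneg[OF r(2)] by (simp add: H_def GG_def)
  have pw: "indicator A p * ennreal (Defs.unit_ball_vol TYPE(real^2) / measure lebesgue (finsler_ball C p))
            \<le> ennreal (H p)" for p
  proof (cases "p \<in> A")
    case False thus ?thesis by simp
  next
    case True
    then obtain w where w: "\<bar>w$2\<bar> < w$1" "w$1 < 1" "p = L w"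
      using tri_sub unfolding A_def by blast
    have hd: "hilbert_dist C 0 p < R" using True unfolding A_def hilbert_ball_def by auto
    have w1: "w$1 < r" unfolding r_def E_def
      by (rule region) (use w hd dist_formula(1)[OF w(1,2)] in auto)
    have Mp: "M p = w" using w(3) M_L by simp
    have ab: "0 < 1 - w$1" "0 < 1 - \<bar>w$2\<bar>" using w by auto
    have "Defs.unit_ball_vol TYPE(real^2) / measure lebesgue (finsler_ball C p)
          \<le> pi / (dt * (4 * (1 - w$1) * (1 - \<bar>w$2\<bar>)))"
      using density_bound[OF w(1,2)] w(3) by (simp add: dt_def)
    also have "\<dots> = k / (1 - w$1) * (1 / (1 - \<bar>w$2\<bar>))"
      using ab dt by (simp add: k_def field_simps)
    also have "\<dots> \<le> k / (1 - w$1) * g2 r (w$2)"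
      using g2_lower[of "w$2" r] w w1 r ab k by (intro mult_left_mono) auto
    also have "\<dots> = H p" unfolding H_def Mp using w(1,2) w1 by (simp add: GG_def g1_def)
    finally show ?thesis using True by (simp add: ennreal_leI)
  qed
  define V where "V = 2 * k * (ln (1 - r))^2"
  have Vnn: "0 \<le> V" using k by (simp add: V_def)
  have GGint: "(GG k r has_integral V) UNIV"
    by (rule nn_integral_has_integral) (use int_GG[OF k r] g1_nonneg[OF k r(2)] g2_nonneg[OF r(2)] Vnn
        in \<open>auto simp: V_def GG_def\<close>)
  have HL: "H (L x) = GG k r x" for x by (simp add: H_def M_L)
  have "(\<lambda>x. dt * H (L x)) absolutely_integrable_on UNIV \<and> integral UNIV (\<lambda>x. dt * H (L x)) = dt * V"
  proof
    have "((\<lambda>x. dt * GG k r x) has_integral dt * V) UNIV" using has_integral_mult_right[OF GGint] .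
    thus "(\<lambda>x. dt * H (L x)) absolutely_integrable_on UNIV"
      using Hnn[of "L _"] dt HL by (intro nonnegative_absolutely_integrable_1) (auto simp: HL)
    show "integral UNIV (\<lambda>x. dt * H (L x)) = dt * V"
      using integral_unique[OF GGint] by (simp add: HL)
  qed
  hence Hai: "H absolutely_integrable_on (L ` UNIV) \<and> integral (L ` UNIV) H = dt * V"
    using cov_real[OF linL, where f=H and S=UNIV and b="dt * V"] by (simp add: dt_def)
  have surjL: "L ` UNIV = UNIV" using L_M by (metis surjI)
  have Hint: "(H has_integral dt * V) UNIV"
    using Hai surjL set_lebesgue_integral_eq_integral(1) by (metis has_integral_integral)
  have "integral\<^sup>N lborel (\<lambda>x. ennreal (indicator UNIV x * H x)) = ennreal (dt * V)"
    by (rule nn_integral_has_integral_lebesgue[OF _ Hint]) (simp add: Hnn)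
  hence intH: "(\<integral>\<^sup>+x. ennreal (H x) \<partial>lebesgue) = ennreal (dt * V)"
    by (simp add: nn_integral_completion)
  have lr: "- ln (1 - r) = ln ((E + 1) / 2)"
  proof -
    have "1 - r = 2 / (E + 1)" using E1 by (simp add: r_def field_simps)
    thus ?thesis using E1 by (simp add: ln_div)
  qed
  have l0: "0 \<le> ln ((E + 1) / 2)" using E1 by simp
  have l2: "ln ((E + 1) / 2) \<le> 2 * R"
  proof -
    have "(E + 1) / 2 \<le> E" using E1 by simp
    hence "ln ((E + 1) / 2) \<le> ln E" using E1 by simp
    thus ?thesis by (simp add: E_def)
  qed
  have "(ln (1 - r))^2 = (ln ((E + 1) / 2))^2" using lr by (metis power2_minus)
  also have "\<dots> \<le> (2 * R)^2" using l0 l2 by (intro power_mono) auto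
  finally have sq: "(ln (1 - r))^2 \<le> 4 * R^2" by simp
  have "dt * V = pi / 2 * (ln (1 - r))^2" using dt by (simp add: V_def k_def field_simps)
  also have "\<dots> \<le> pi / 2 * (4 * R^2)" using sq by (intro mult_left_mono) auto
  also have "\<dots> = 2 * pi * R^2" by simp
  finally have fin: "dt * V \<le> 2 * pi * R^2" .
  have "hilbert_measure C A \<le> (\<integral>\<^sup>+x. ennreal (H x) \<partial>lebesgue)"
    unfolding hilbert_measure_def by (rule nn_integral_mono) (rule pw)
  also have "\<dots> \<le> ennreal (2 * pi * R\<^sup>2)" using intH fin by (simp add: ennreal_leI)
  finally show ?thesis unfolding A_def .
qed

end

theorem lemma2p5:
  fixes C :: "(real^2) set" and P Q :: "real^2" and R :: real
  assumes "open C" and "bounded C" and "convex C" and "C \<noteq> {}" and "0 \<in> C"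
    and "P \<noteq> Q"
    and "closed_segment P Q \<subseteq> frontier C"
    and "closed_segment (-P) (-Q) \<subseteq> frontier C"
    and "R > 0"
  shows "hilbert_ball C 0 R \<inter> open_triangle P 0 Q
           = hilbert_ball (interior (convex hull {P, Q, -P, -Q})) 0 R \<inter> open_triangle P 0 Q
         \<and> hilbert_measure C (hilbert_ball C 0 R \<inter> open_triangle P 0 Q) \<le> ennreal (2 * pi * R\<^sup>2)"
proof -
  interpret hsetting C P Q using assms by unfold_locales auto
  show ?thesis using part1[of R] part2[OF assms(9)] by simp
qed

end
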